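(* For integers $n\ge 2$ and $0\le i\le n$, let $f_{n,i}$ be the number of paths in $\mathrm{Bal}^*(n,i)$ containing at least one $D$ step. Then $$f_{n,i}=\binom{2n-2}{n-i-1}-\binom{2n-2}{n-i-2}-\binom{n-2}{n-i-1}.$$
   Context: Binomial coefficients $\binom{a}{c}$ with $a\ge 0$ are $0$ if $c<0$ or $c>a$. $\mathrm{Bal}^*(n,i)$ is the set of lattice paths from $(0,0)$ to $(n,i)$ with steps $U=(1,1)$, $D=(1,-1)$ and horizontal steps $(1,0)$ colored umber or denim, never going below the $x$-axis, such that no umber step occurs at height $0$ and no denim step occurs before the first $D$ step. *)

theory Defs
  imports Main
begin

datatype step = U | D | HU | HD  (* HU = umber horizontal, HD = denim horizontal *)

fun delta :: "step \<Rightarrow> int" where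
  "delta U = 1" | "delta D = -1" | "delta HU = 0" | "delta HD = 0"

(* height before the k-th step (0-indexed), i.e. after the first k steps *)
definition height :: "step list \<Rightarrow> nat \<Rightarrow> int" where
  "height p k = sum_list (map delta (take k p))"

definition is_Bal_star :: "nat \<Rightarrow> nat \<Rightarrow> step list \<Rightarrow> bool" where
  "is_Bal_star n i p \<longleftrightarrow>
     length p = n \<and> height p n = int i \<and>
     (\<forall>k\<le>n. height p k \<ge> 0) \<and>
     (\<forall>k<n. p ! k = HU \<longrightarrow> height p k \<noteq> 0) \<and>
     (\<forall>k<n. p ! k = HD \<longrightarrow> (\<exists>j<k. p ! j = D))"

definition Bal_star :: "nat \<Rightarrow> nat \<Rightarrow> step list set" where
  "Bal_star n i = {p. is_Bal_star n i p}"

definition binom :: "nat \<Rightarrow> int \<Rightarrow> int" where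
  "binom a c = (if c < 0 then 0 else int (a choose nat c))"

end

theory Submission
  imports Defs
begin

fun tr :: "(int \<times> bool) option \<Rightarrow> step \<Rightarrow> (int \<times> bool) option" where
  "tr None _ = None"
| "tr (Some (h,b)) U = Some (h+1,b)"
| "tr (Some (h,b)) D = (if h \<ge> 1 then Some (h-1, True) else None)"
| "tr (Some (h,b)) HU = (if h \<noteq> 0 then Some (h,b) else None)"
| "tr (Some (h,b)) HD = (if b then Some (h,b) else None)"

definition st :: "step list \<Rightarrow> (int \<times> bool) option" where
  "st p = fold (\<lambda>s acc. tr acc s) p (Some (0,False))"

lemma st_Nil[simp]: "st [] = Some (0,False)" by (simp add: st_def)
lemma st_snoc[simp]: "st (xs@[x]) = tr (st xs) x" by (simp add: st_def)

definition valid :: "step list \<Rightarrow> bool" where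
  "valid p \<longleftrightarrow> (\<forall>k\<le>length p. height p k \<ge> 0) \<and>
     (\<forall>k<length p. p ! k = HU \<longrightarrow> height p k \<noteq> 0) \<and>
     (\<forall>k<length p. p ! k = HD \<longrightarrow> (\<exists>j<k. p ! j = D))"

lemma height_snoc_le: "k \<le> length xs \<Longrightarrow> height (xs@[x]) k = height xs k"
  by (simp add: height_def)

lemma height_snoc_len: "height (xs@[x]) (Suc (length xs)) = height xs (length xs) + delta x"
  by (simp add: height_def)

lemma valid_Nil: "valid []" by (simp add: valid_def height_def)

lemma valid_snoc: "valid (xs@[x]) \<longleftrightarrow> valid xs \<and> 0 \<le> height xs (length xs) + delta x \<and>
   (x = HU \<longrightarrow> height xs (length xs) \<noteq> 0) \<and> (x = HD \<longrightarrow> D \<in> set xs)"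
proof -
  let ?n = "length xs"
  have A: "(\<forall>k\<le>length (xs@[x]). height (xs@[x]) k \<ge> 0) \<longleftrightarrow>
      (\<forall>k\<le>?n. height xs k \<ge> 0) \<and> 0 \<le> height xs ?n + delta x"
  proof -
    have "(\<forall>k\<le>Suc ?n. height (xs@[x]) k \<ge> 0) \<longleftrightarrow>
      (\<forall>k\<le>?n. height (xs@[x]) k \<ge> 0) \<and> height (xs@[x]) (Suc ?n) \<ge> 0"
      using le_Suc_eq by auto
    then show ?thesis using height_snoc_le[of _ xs x] height_snoc_len[of xs x] by simp
  qed
  have B: "(\<forall>k<length (xs@[x]). (xs@[x]) ! k = HU \<longrightarrow> height (xs@[x]) k \<noteq> 0) \<longleftrightarrow>
      (\<forall>k<?n. xs ! k = HU \<longrightarrow> height xs k \<noteq> 0) \<and> (x = HU \<longrightarrow> height xs ?n \<noteq> 0)"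
  proof -
    have "(\<forall>k<Suc ?n. (xs@[x]) ! k = HU \<longrightarrow> height (xs@[x]) k \<noteq> 0) \<longleftrightarrow>
      (\<forall>k<?n. (xs@[x]) ! k = HU \<longrightarrow> height (xs@[x]) k \<noteq> 0) \<and>
        ((xs@[x]) ! ?n = HU \<longrightarrow> height (xs@[x]) ?n \<noteq> 0)"
      using less_Suc_eq by auto
    then show ?thesis by (simp add: nth_append height_snoc_le)
  qed
  have C1: "((xs@[x])!k = HD \<longrightarrow> (\<exists>j<k. (xs@[x])!j = D)) \<longleftrightarrow> (xs!k = HD \<longrightarrow> (\<exists>j<k. xs!j = D))"
    if k: "k < ?n" for k
  proof -
    have "(\<exists>j<k. (xs@[x])!j = D) \<longleftrightarrow> (\<exists>j<k. xs!j = D)"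
      using k by (metis less_trans nth_append_left)
    then show ?thesis using k by (simp add: nth_append_left)
  qed
  have C2: "((xs@[x])!?n = HD \<longrightarrow> (\<exists>j<?n. (xs@[x])!j = D)) \<longleftrightarrow> (x = HD \<longrightarrow> D \<in> set xs)"
  proof -
    have "(\<exists>j<?n. (xs@[x])!j = D) \<longleftrightarrow> (\<exists>j<?n. xs!j = D)"
      by (metis nth_append_left)
    also have "\<dots> \<longleftrightarrow> D \<in> set xs" by (metis in_set_conv_nth)
    finally have e: "(\<exists>j<?n. (xs@[x])!j = D) \<longleftrightarrow> D \<in> set xs" .
    show ?thesis by (simp only: nth_append_length e)
  qed
  have C: "(\<forall>k<length (xs@[x]). (xs@[x]) ! k = HD \<longrightarrow> (\<exists>j<k. (xs@[x]) ! j = D)) \<longleftrightarrow>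
      (\<forall>k<?n. xs ! k = HD \<longrightarrow> (\<exists>j<k. xs ! j = D)) \<and> (x = HD \<longrightarrow> D \<in> set xs)"
  proof -
    have "(\<forall>k<length (xs@[x]). (xs@[x]) ! k = HD \<longrightarrow> (\<exists>j<k. (xs@[x]) ! j = D)) \<longleftrightarrow>
      (\<forall>k<?n. (xs@[x]) ! k = HD \<longrightarrow> (\<exists>j<k. (xs@[x]) ! j = D)) \<and>
        ((xs@[x]) ! ?n = HD \<longrightarrow> (\<exists>j<?n. (xs@[x]) ! j = D))"
      by (simp only: length_append_singleton less_Suc_eq) blast
    also have "\<dots> \<longleftrightarrow> (\<forall>k<?n. xs ! k = HD \<longrightarrow> (\<exists>j<k. xs ! j = D)) \<and> (x = HD \<longrightarrow> D \<in> set xs)"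
      using C1 C2 by blast
    finally show ?thesis .
  qed
  show ?thesis unfolding valid_def using A B C by auto
qed

lemma st_char: "st p = (if valid p then Some (height p (length p), D \<in> set p) else None)"
proof (induction p rule: rev_induct)
  case Nil
  then show ?case by (simp add: valid_Nil height_def)
next
  case (snoc x xs)
  show ?case
  proof (cases "valid xs")
    case False
    then show ?thesis using snoc by (simp add: valid_snoc)
  next
    case True
    have H: "height xs (length xs) \<ge> 0" using True by (simp add: valid_def)
    have e: "height (xs@[x]) (length (xs@[x])) = height xs (length xs) + delta x"
      using height_snoc_len by simp
    show ?thesis using snoc True H unfolding e
      by (cases x) (auto simp: valid_snoc)
  qed
qed

lemma st_nonneg: "st p = Some (h,b) \<Longrightarrow> h \<ge> 0"
proof -
  assume a: "st p = Some (h,b)"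
  then have "valid p" and "h = height p (length p)"
    unfolding st_char by (simp_all split: if_splits)
  then show ?thesis unfolding valid_def by auto
qed

lemma UNIV_step: "(UNIV::step set) = {U,D,HU,HD}"
proof -
  have "x \<in> {U,D,HU,HD}" for x :: step by (cases x) auto
  then show ?thesis by blast
qed

lemma fin_len: "finite {xs::step list. length xs = n}"
proof -
  have "finite {xs::step list. set xs \<subseteq> UNIV \<and> length xs = n}"
    by (rule finite_lists_length_eq) (simp add: UNIV_step)
  then show ?thesis by simp
qed

lemma card_split:
  "card {p::step list. length p = Suc n \<and> Q p} =
     card {xs. length xs = n \<and> Q (xs@[U])} + card {xs. length xs = n \<and> Q (xs@[D])}
   + card {xs. length xs = n \<and> Q (xs@[HU])} + card {xs. length xs = n \<and> Q (xs@[HD])}"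
proof -
  define S where "S x = {xs. length xs = n \<and> Q (xs@[x])}" for x
  have fS: "finite (S x)" for x using fin_len[of n] unfolding S_def
    by (rule rev_finite_subset) auto
  have cS: "card ((\<lambda>xs. xs@[x]) ` S x) = card (S x)" for x
    by (rule card_image) (simp add: inj_on_def)
  have eq: "{p::step list. length p = Suc n \<and> Q p} =
     (\<lambda>xs. xs@[U]) ` S U \<union> (\<lambda>xs. xs@[D]) ` S D \<union> (\<lambda>xs. xs@[HU]) ` S HU \<union> (\<lambda>xs. xs@[HD]) ` S HD"
  proof (rule set_eqI, rule iffI)
    fix p assume "p \<in> {p::step list. length p = Suc n \<and> Q p}"
    then have l: "length p = Suc n" and q: "Q p" by auto
    then obtain xs x where p: "p = xs@[x]" by (metis length_Suc_conv_rev)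
    then show "p \<in> (\<lambda>xs. xs@[U]) ` S U \<union> (\<lambda>xs. xs@[D]) ` S D \<union> (\<lambda>xs. xs@[HU]) ` S HU \<union> (\<lambda>xs. xs@[HD]) ` S HD"
      using l q by (cases x) (auto simp: S_def)
  qed (auto simp: S_def)
  show ?thesis unfolding eq
    apply (subst card_Un_disjoint, (auto simp: fS)[3])+
    apply (simp only: cS)
    apply (simp add: S_def)
    done
qed

definition N :: "nat \<Rightarrow> int \<Rightarrow> bool \<Rightarrow> nat" where
  "N n h b = card {p. length p = n \<and> st p = Some (h,b)}"

lemma N_neg: "h < 0 \<Longrightarrow> N n h b = 0"
proof -
  assume "h < 0"
  then have "{p. length p = n \<and> st p = Some (h,b)} = {}" using st_nonneg by fastforce
  then show ?thesis unfolding N_def by (metis card.empty)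
qed

lemma N_0: "N 0 h b = (if h = 0 \<and> \<not> b then 1 else 0)"
proof -
  have "{p::step list. length p = 0 \<and> st p = Some (h,b)} = (if h=0 \<and> \<not>b then {[]} else {})" by auto
  then show ?thesis unfolding N_def by simp
qed

lemma tr_U: "tr s U = Some (h,b) \<longleftrightarrow> s = Some (h-1,b)"
  by (cases s) (auto split: if_splits)
lemma tr_D: "tr s D = Some (h,b) \<longleftrightarrow> b \<and> h \<ge> 0 \<and> (s = Some (h+1,True) \<or> s = Some (h+1,False))"
  by (cases s) (auto split: if_splits)
lemma tr_HU: "tr s HU = Some (h,b) \<longleftrightarrow> h \<noteq> 0 \<and> s = Some (h,b)"
  by (cases s) (auto split: if_splits)
lemma tr_HD: "tr s HD = Some (h,b) \<longleftrightarrow> b \<and> s = Some (h,b)"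
  by (cases s) (auto split: if_splits)

lemma N_Suc: "N (Suc n) h b = N n (h-1) b
   + (if b \<and> h \<ge> 0 then N n (h+1) True + N n (h+1) False else 0)
   + (if h \<noteq> 0 then N n h b else 0) + (if b then N n h b else 0)"
proof -
  have 1: "card {xs. length xs = n \<and> st (xs@[U]) = Some (h,b)} = N n (h-1) b"
    by (simp add: tr_U N_def)
  have 2: "card {xs. length xs = n \<and> st (xs@[D]) = Some (h,b)} =
     (if b \<and> h \<ge> 0 then N n (h+1) True + N n (h+1) False else 0)"
  proof (cases "b \<and> h \<ge> 0")
    case True
    have "{xs. length xs = n \<and> st (xs@[D]) = Some (h,b)} =
       {xs. length xs = n \<and> st xs = Some (h+1,True)} \<union> {xs. length xs = n \<and> st xs = Some (h+1,False)}"
      using True by (auto simp: tr_D)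
    moreover have "finite {xs. length xs = n \<and> st xs = Some (h+1,c)}" for c
      using fin_len[of n] by (rule rev_finite_subset) auto
    ultimately show ?thesis using True
      by (simp add: card_Un_disjoint disjoint_iff N_def)
  next
    case False
    then show ?thesis by (auto simp: tr_D)
  qed
  have 3: "card {xs. length xs = n \<and> st (xs@[HU]) = Some (h,b)} = (if h \<noteq> 0 then N n h b else 0)"
    by (simp add: tr_HU N_def)
  have 4: "card {xs. length xs = n \<and> st (xs@[HD]) = Some (h,b)} = (if b then N n h b else 0)"
    by (simp add: tr_HD N_def)
  show ?thesis
    unfolding N_def[of "Suc n"] card_split[of n] using 1 2 3 4 by (simp add: N_def)
qed


lemma binom_neg: "k < 0 \<Longrightarrow> binom a k = 0" by (simp add: binom_def)
lemma binom_big: "k > int a \<Longrightarrow> binom a k = 0"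
  by (simp add: binom_def binomial_eq_0 nat_less_iff)

lemma binom_pascal: "binom (Suc a) k = binom a k + binom a (k-1)"
proof (cases "k \<le> 0")
  case True
  then show ?thesis by (cases "k = 0") (auto simp: binom_def)
next
  case False
  then have e: "nat k = Suc (nat (k-1))" by simp
  show ?thesis using False unfolding binom_def e by simp
qed

lemma binom_pascal2: "binom (Suc (Suc a)) k = binom a k + 2 * binom a (k-1) + binom a (k-2)"
  using binom_pascal[of "Suc a" k] binom_pascal[of a k] binom_pascal[of a "k-1"] by simp

lemma binom_sym: "binom a k = binom a (int a - k)"
proof -
  consider "k < 0" | "k > int a" | "0 \<le> k \<and> k \<le> int a" by linarith
  then show ?thesis
  proof cases
    case 1 then show ?thesis by (simp add: binom_neg binom_big)
  next
    case 2 then show ?thesis by (simp add: binom_neg binom_big)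
  next
    case 3
    then have "nat (int a - k) = a - nat k" by linarith
    then show ?thesis using 3 unfolding binom_def
      by (simp add: binomial_symmetric[of "nat k" a] nat_le_iff)
  qed
qed

lemma binom_0[simp]: "binom a 0 = 1" by (simp add: binom_def)
lemma binom_self: "binom a (int a) = 1" by (simp add: binom_def)

lemma B_closed: "int (N (Suc n) h False) = binom n (h-1)"
proof (induction n arbitrary: h)
  case 0
  show ?case by (simp add: N_Suc N_0 binom_def)
next
  case (Suc n)
  have "int (N (Suc (Suc n)) h False) = int (N (Suc n) (h-1) False) + (if h \<noteq> 0 then int (N (Suc n) h False) else 0)"
    by (simp add: N_Suc[of "Suc n"])
  also have "\<dots> = binom n (h-2) + (if h \<noteq> 0 then binom n (h-1) else 0)"
    using Suc.IH[of "h-1"] Suc.IH[of h] by simp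
  also have "\<dots> = binom (Suc n) (h-1)"
    using binom_pascal[of n "h-1"] binom_neg[of "-1" n] by (cases "h = 0") simp_all
  finally show ?case .
qed

lemma A_rec: "h \<ge> 0 \<Longrightarrow> int (N (Suc n) h True) = int (N n (h-1) True) + int (N n (h+1) True)
   + int (N n (h+1) False) + (if h \<noteq> 0 then int (N n h True) else 0) + int (N n h True)"
  by (simp add: N_Suc)

lemma A1: "N 1 h True = 0" by (simp add: N_Suc N_0)

lemma A_closed: "h \<ge> 0 \<Longrightarrow> int (N (Suc (Suc k)) h True) =
   binom (Suc (Suc (2*k))) (int k + 1 - h) - binom (Suc (Suc (2*k))) (int k - h) - binom k (int k + 1 - h)"
proof (induction k arbitrary: h)
  case 0
  have "int (N 2 h True) = (if h = 0 then 1 else 0)"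
    using A_rec[of h 1] 0 B_closed[of 0 "h+1"] A1
    by (simp add: numeral_2_eq_2 binom_def)
  moreover have "h = 0 \<or> h = 1 \<or> h \<ge> 2" using 0 by linarith
  ultimately show ?case by (auto simp: binom_def numeral_2_eq_2)
next
  case (Suc k)
  let ?M = "Suc (Suc (2*k))"
  have IH: "\<And>h. h \<ge> 0 \<Longrightarrow> int (N (Suc (Suc k)) h True) =
   binom ?M (int k + 1 - h) - binom ?M (int k - h) - binom k (int k + 1 - h)" by (rule Suc.IH)
  have R: "int (N (Suc (Suc (Suc k))) h True) = int (N (Suc (Suc k)) (h-1) True) + int (N (Suc (Suc k)) (h+1) True)
   + binom (Suc k) h + (if h \<noteq> 0 then int (N (Suc (Suc k)) h True) else 0) + int (N (Suc (Suc k)) h True)"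
    using A_rec[of h "Suc (Suc k)"] Suc.prems B_closed[of "Suc k" "h+1"] by simp
  have G: "binom (Suc (Suc (2 * Suc k))) (int (Suc k) + 1 - h) = binom (Suc (Suc ?M)) (int k + 2 - h)"
    "binom (Suc (Suc (2 * Suc k))) (int (Suc k) - h) = binom (Suc (Suc ?M)) (int k + 1 - h)"
    "binom (Suc k) (int (Suc k) + 1 - h) = binom (Suc k) (int k + 2 - h)"
    by (simp_all add: algebra_simps)
  show ?case
  proof (cases "h = 0")
    case True
    have e1: "int (N (Suc (Suc k)) 1 True) = binom ?M (int k) - binom ?M (int k - 1) - binom k (int k)"
      using IH[of 1] by simp
    have e0: "int (N (Suc (Suc k)) 0 True) = binom ?M (int k + 1) - binom ?M (int k) - binom k (int k + 1)"
      using IH[of 0] by simp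
    have m: "int (N (Suc (Suc k)) (-1) True) = 0" using N_neg by simp
    have p1: "binom (Suc (Suc ?M)) (int k + 2) = binom ?M (int k + 2) + 2 * binom ?M (int k + 1) + binom ?M (int k)"
      using binom_pascal2[of ?M "int k + 2"] by (simp add: algebra_simps)
    have p2: "binom (Suc (Suc ?M)) (int k + 1) = binom ?M (int k + 1) + 2 * binom ?M (int k) + binom ?M (int k - 1)"
      using binom_pascal2[of ?M "int k + 1"] by (simp add: algebra_simps)
    have s1: "binom ?M (int k + 2) = binom ?M (int k)"
      using binom_sym[of ?M "int k + 2"] by simp
    have z: "binom k (int k) = 1" "binom k (int k + 1) = 0" "binom (Suc k) (int k + 2) = 0"
      by (simp_all add: binom_self binom_big)
    show ?thesis unfolding G using R True e1 e0 m p1 p2 s1 z by simp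
  next
    case False
    then have hp: "h \<ge> 1" using Suc.prems by simp
    have e1: "int (N (Suc (Suc k)) (h-1) True) = binom ?M (int k + 2 - h) - binom ?M (int k + 1 - h) - binom k (int k + 2 - h)"
      using IH[of "h-1"] hp by (simp add: algebra_simps)
    have e2: "int (N (Suc (Suc k)) h True) = binom ?M (int k + 1 - h) - binom ?M (int k - h) - binom k (int k + 1 - h)"
      using IH[of h] hp by (simp add: algebra_simps)
    have e3: "int (N (Suc (Suc k)) (h+1) True) = binom ?M (int k - h) - binom ?M (int k - 1 - h) - binom k (int k - h)"
      using IH[of "h+1"] hp by (simp add: algebra_simps)
    have p1: "binom (Suc (Suc ?M)) (int k + 2 - h) = binom ?M (int k + 2 - h) + 2 * binom ?M (int k + 1 - h) + binom ?M (int k - h)"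
      using binom_pascal2[of ?M "int k + 2 - h"] by (simp add: algebra_simps)
    have p2: "binom (Suc (Suc ?M)) (int k + 1 - h) = binom ?M (int k + 1 - h) + 2 * binom ?M (int k - h) + binom ?M (int k - 1 - h)"
      using binom_pascal2[of ?M "int k + 1 - h"] by (simp add: algebra_simps)
    have p3: "binom (Suc (Suc k)) (int k + 2 - h) = binom k (int k + 2 - h) + 2 * binom k (int k + 1 - h) + binom k (int k - h)"
      using binom_pascal2[of k "int k + 2 - h"] by (simp add: algebra_simps)
    have p4: "binom (Suc (Suc k)) (int k + 2 - h) = binom (Suc k) (int k + 2 - h) + binom (Suc k) (int k + 1 - h)"
      using binom_pascal[of "Suc k" "int k + 2 - h"] by (simp add: algebra_simps)
    have s: "binom (Suc k) h = binom (Suc k) (int k + 1 - h)"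
      using binom_sym[of "Suc k" h] by (simp add: algebra_simps)
    have RR: "int (N (Suc (Suc (Suc k))) h True) = int (N (Suc (Suc k)) (h-1) True) + int (N (Suc (Suc k)) (h+1) True)
      + binom (Suc k) h + 2 * int (N (Suc (Suc k)) h True)"
      using R False by simp
    show ?thesis unfolding G RR e1 e2 e3 s using p1 p2 p3 p4 by (smt (verit))
  qed
qed

theorem lemma15:
  fixes n i :: nat
  assumes "n \<ge> 2" and "i \<le> n"
  shows "int (card {p \<in> Bal_star n i. D \<in> set p}) =
           binom (2*n-2) (int n - int i - 1) - binom (2*n-2) (int n - int i - 2)
           - binom (n-2) (int n - int i - 1)"
proof -
  obtain k where k: "n = Suc (Suc k)" using assms(1) by (metis add_2_eq_Suc le_Suc_ex)
  have "{p \<in> Bal_star n i. D \<in> set p} = {p. length p = n \<and> st p = Some (int i, True)}"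
    by (auto simp: Bal_star_def is_Bal_star_def st_char valid_def split: if_splits)
  then have "int (card {p \<in> Bal_star n i. D \<in> set p}) = int (N n (int i) True)"
    by (simp add: N_def)
  also have "\<dots> = binom (Suc (Suc (2*k))) (int k + 1 - int i) - binom (Suc (Suc (2*k))) (int k - int i)
      - binom k (int k + 1 - int i)"
    unfolding k by (rule A_closed) simp
  also have "\<dots> = binom (2*n-2) (int n - int i - 1) - binom (2*n-2) (int n - int i - 2)
           - binom (n-2) (int n - int i - 1)"
    unfolding k by (simp add: algebra_simps)
  finally show ?thesis .
qed

end
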